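(* Under the MS-LS model described in the context, assume additionally that $\alpha_i+\alpha_j=\alpha$ for all $i\neq j$. Then for any node $i$ and state $k$, the second factorial moment of the strength given $s_t=k$ is \[ \left.\widetilde G_k''(x)\right|_{x=1}=e^{2\alpha}(N-1)\big(8\sigma_k^2\beta+1\big)^{-d/2}+(N-1)(N-2)e^{2\alpha}\big(2\sigma_k^2\beta+1\big)^{-d/2}\big(6\sigma_k^2\beta+1\big)^{-d/2}. \]
   Context: MS-LS model. Let $N\ge 2$ nodes $V=\{1,\dots,N\}$, a latent dimension $d\ge1$, a constant $\beta>0$, real constants $\alpha_1,\dots,\alpha_N$ (individual effects) and variances $\sigma_1^2,\dots,\sigma_K^2>0$. Let $(s_t)_{t\ge1}$ be a Markov chain on $\{1,\dots,K\}$, $K<\infty$, with transition probabilities $q_{lk}=\mathbb P(s_t=k\mid s_{t-1}=l)$. Independently of the chain, let $Z_{ik}$, $i=1,\dots,N$, $k=1,\dots,K$, be independent random vectors with $Z_{ik}\sim\mathcal N(\mathbf 0,\sigma_k^2 I_d)$ in $\mathbb R^d$. The latent position of node $i$ at time $t$ is $X_{it}=\sum_{k=1}^K\mathbb I(s_t=k)Z_{ik}$. Conditionally on the chain and on all $Z_{ik}$, the edge weights $Y_{ijt}=Y_{jit}$ ($i\ne j$) are independent across unordered pairs, each depending on the chain only through $s_t$, with $Y_{ijt}\sim\mathrm{Poisson}(\lambda_{ijt})$ and $\lambda_{ijt}=\exp\{\alpha_i+\alpha_j-\sum_{k=1}^K\mathbb I(s_t=k)\beta\|Z_{ik}-Z_{jk}\|^2\}$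 (squared Euclidean norm). The nodal strength of node $i$ is $Y_{it}=\sum_{j\neq i}Y_{ijt}$. Its conditional probability generating functions are $G_l(x)=\mathbb E(x^{Y_{it}}\mid s_{t-1}=l)$ and $\widetilde G_k(x)=\mathbb E(x^{Y_{it}}\mid s_t=k)$, where expectations integrate over both the Poisson weights and the latent vectors $Z$. *)

theory Defs
  imports "HOL-Probability.Probability"
begin

text \<open>Nodes are 1..N, states 1..K, latent coordinates 1..d.
  A latent configuration z maps (i,k,c) to the c-th coordinate of Z_ik.
  sigma k is the standard deviation (so sigma k ^ 2 is the variance sigma_k^2).\<close>

definition latent_measure ::
  "nat \<Rightarrow> nat \<Rightarrow> nat \<Rightarrow> (nat \<Rightarrow> real) \<Rightarrow> (nat \<times> nat \<times> nat \<Rightarrow> real) measure" where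
  "latent_measure N K d \<sigma> =
     PiM ({1..N} \<times> {1..K} \<times> {1..d}) (\<lambda>(i, k, c). density lborel (normal_density 0 (\<sigma> k)))"

definition latent_sqdist :: "nat \<Rightarrow> (nat \<times> nat \<times> nat \<Rightarrow> real) \<Rightarrow> nat \<Rightarrow> nat \<Rightarrow> nat \<Rightarrow> real" where
  "latent_sqdist d z k i j = (\<Sum>c\<in>{1..d}. (z (i, k, c) - z (j, k, c))\<^sup>2)"

definition edge_rate ::
  "nat \<Rightarrow> nat \<Rightarrow> (nat \<Rightarrow> real) \<Rightarrow> real \<Rightarrow> (nat \<times> nat \<times> nat \<Rightarrow> real) \<Rightarrow> nat \<Rightarrow> nat \<Rightarrow> nat \<Rightarrow> real" where
  "edge_rate K d \<alpha> \<beta> z s i j =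
     exp (\<alpha> i + \<alpha> j - (\<Sum>k\<in>{1..K}. of_bool (s = k) * \<beta> * latent_sqdist d z k i j))"

text \<open>Unordered pairs {i,j}, i ~= j, represented as (min, max).\<close>
definition node_pairs :: "nat \<Rightarrow> (nat \<times> nat) set" where
  "node_pairs N = {(i, j). i \<in> {1..N} \<and> j \<in> {1..N} \<and> i < j}"

definition weights_measure ::
  "nat \<Rightarrow> nat \<Rightarrow> nat \<Rightarrow> (nat \<Rightarrow> real) \<Rightarrow> real \<Rightarrow> (nat \<times> nat \<times> nat \<Rightarrow> real) \<Rightarrow> nat
     \<Rightarrow> (nat \<times> nat \<Rightarrow> nat) measure" where
  "weights_measure N K d \<alpha> \<beta> z s =
     PiM (node_pairs N) (\<lambda>(i, j). measure_pmf (poisson_pmf (edge_rate K d \<alpha> \<beta> z s i j)))"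

definition strength :: "nat \<Rightarrow> nat \<Rightarrow> (nat \<times> nat \<Rightarrow> nat) \<Rightarrow> nat" where
  "strength N i y = (\<Sum>j\<in>{1..N} - {i}. y (min i j, max i j))"

definition cond_pgf ::
  "nat \<Rightarrow> nat \<Rightarrow> nat \<Rightarrow> (nat \<Rightarrow> real) \<Rightarrow> (nat \<Rightarrow> real) \<Rightarrow> real \<Rightarrow> nat \<Rightarrow> nat \<Rightarrow> real \<Rightarrow> real" where
  "cond_pgf N K d \<sigma> \<alpha> \<beta> k i x =
     (\<integral>z. (\<integral>y. x ^ strength N i y \<partial>weights_measure N K d \<alpha> \<beta> z k) \<partial>latent_measure N K d \<sigma>)"

end

theory Submission imports Defs begin


lemma gauss_step:
  fixes g s u :: real
  assumes g: "0 \<le> g" and s: "0 < s"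
  shows "(\<integral>v. exp (-g*(u-v)\<^sup>2) \<partial>density lborel (normal_density 0 s))
         = exp(-g* u\<^sup>2/(1+2 * g *  s\<^sup>2)) / sqrt(1+2 * g *  s\<^sup>2)"
proof -
  define q where "q = 1+2 * g *  s\<^sup>2"
  have q: "q > 0" using g s unfolding q_def by (simp add: add_pos_nonneg)
  define s' where "s' = s / sqrt q"
  define m where "m = 2 * g *  s\<^sup>2* u/q"
  have s'2: "s'\<^sup>2 = s\<^sup>2/q" using q by (simp add: s'_def power_divide)
  have pref: "1 / sqrt (2 * pi * s'\<^sup>2) = sqrt q / sqrt (2* pi* s\<^sup>2)"
    using q s by (simp add: s'2 real_sqrt_divide field_simps real_sqrt_mult)
  have expo: "-(v - 0)\<^sup>2 / (2 * s\<^sup>2) + (-g*(u-v)\<^sup>2) = -g* u\<^sup>2/q + (-(v - m)\<^sup>2 / (2 * s'\<^sup>2))" for v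
  proof -
    have e1: "(v - m)\<^sup>2 / (2 * s'\<^sup>2) = (q* v - 2* g* s\<^sup>2* u)\<^sup>2/(2* s\<^sup>2* q)"
      unfolding s'2 m_def using q s by (simp add: field_simps power2_eq_square)
    have e2: "(v - 0)\<^sup>2 / (2 * s\<^sup>2) + g*(u-v)\<^sup>2 = g* u\<^sup>2/q + (q* v - 2* g* s\<^sup>2* u)\<^sup>2/(2* s\<^sup>2* q)"
    proof -
      have "2* s\<^sup>2* q*((v - 0)\<^sup>2 / (2 * s\<^sup>2) + g*(u-v)\<^sup>2) = 2* s\<^sup>2* q*(g* u\<^sup>2/q + (q* v - 2* g* s\<^sup>2* u)\<^sup>2/(2* s\<^sup>2* q))"
      proof -
        have "2* s\<^sup>2* q*((v - 0)\<^sup>2 / (2 * s\<^sup>2) + g*(u-v)\<^sup>2) = q* v\<^sup>2 + 2* s\<^sup>2* q* g*(u-v)\<^sup>2"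
          using s by (simp add: field_simps)
        also have "\<dots> = 2* s\<^sup>2* g* u\<^sup>2 + (q* v - 2* g* s\<^sup>2* u)\<^sup>2"
          unfolding q_def by (simp add: power2_eq_square algebra_simps)
        also have "\<dots> = 2* s\<^sup>2* q*(g* u\<^sup>2/q + (q* v - 2* g* s\<^sup>2* u)\<^sup>2/(2* s\<^sup>2* q))"
          using s q by (simp add: field_simps)
        finally show ?thesis .
      qed
      then show ?thesis using s q by simp
    qed
    show ?thesis using e1 e2 by (simp add: algebra_simps)
  qed
  have pw: "normal_density 0 s v * exp (-g*(u-v)\<^sup>2) = exp(-g* u\<^sup>2/q)/sqrt q * normal_density m s' v" for v
  proof -
    have "normal_density 0 s v * exp (-g*(u-v)\<^sup>2) = 1 / sqrt (2 * pi * s\<^sup>2) * exp (-(v - 0)\<^sup>2 / (2 * s\<^sup>2) + (-g*(u-v)\<^sup>2))"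
      unfolding normal_density_def exp_add by (simp only: mult.assoc)
    also have "\<dots> = 1 / sqrt (2 * pi * s\<^sup>2) * exp (-g* u\<^sup>2/q + (-(v - m)\<^sup>2 / (2 * s'\<^sup>2)))"
      by (simp only: expo)
    also have "\<dots> = exp(-g* u\<^sup>2/q)/sqrt q * (sqrt q / sqrt (2* pi* s\<^sup>2) * exp (-(v - m)\<^sup>2 / (2 * s'\<^sup>2)))"
    proof -
      have "sqrt q \<noteq> 0" using q by simp
      then show ?thesis unfolding exp_add by (simp add: field_simps)
    qed
    also have "\<dots> = exp(-g* u\<^sup>2/q)/sqrt q * normal_density m s' v"
      by (simp add: normal_density_def pref)
    finally show ?thesis .
  qed
  have s'pos: "0 < s'" using s q by (simp add: s'_def)
  have "(\<integral>v. exp (-g*(u-v)\<^sup>2) \<partial>density lborel (normal_density 0 s))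
      = (\<integral>v. normal_density 0 s v * exp (-g*(u-v)\<^sup>2) \<partial>lborel)"
    by (subst integral_density) auto
  also have "\<dots> = (\<integral>v. exp(-g* u\<^sup>2/q)/sqrt q * normal_density m s' v \<partial>lborel)"
    by (simp only: pw)
  also have "\<dots> = exp(-g* u\<^sup>2/q)/sqrt q"
    using s'pos by simp
  finally show ?thesis unfolding q_def .
qed

lemma prod_triple:
  assumes "finite T" "finite S"
  shows "(\<Prod>p\<in>T \<times> {k} \<times> S. F p) = (\<Prod>t\<in>T. \<Prod>c\<in>S. F (t,k,c))"
proof -
  have "(\<Prod>t\<in>T. \<Prod>c\<in>S. F (t,k,c)) = (\<Prod>t\<in>T. \<Prod>q\<in>{k} \<times> S. F (t,q))"
  proof (rule prod.cong[OF refl])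
    fix t
    have "(\<Prod>q\<in>{k} \<times> S. F (t,q)) = (\<Prod>k'\<in>{k}. \<Prod>c\<in>S. F (t,k',c))"
      using assms by (simp add: prod.Sigma split_def)
    then show "(\<Prod>c\<in>S. F (t,k,c)) = (\<Prod>q\<in>{k} \<times> S. F (t,q))" by simp
  qed
  also have "\<dots> = (\<Prod>p\<in>T \<times> {k} \<times> S. F p)"
    using assms by (simp add: prod.Sigma split_def)
  finally show ?thesis ..
qed

definition NM :: "(nat \<Rightarrow> real) \<Rightarrow> nat \<times> nat \<times> nat \<Rightarrow> real measure" where
  "NM \<sigma> p = density lborel (normal_density 0 (if 0 < \<sigma> (fst (snd p)) then \<sigma> (fst (snd p)) else 1))"

lemma prob_NM: "prob_space (NM \<sigma> p)"
  unfolding NM_def by (rule prob_space_normal_density) auto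

lemma sets_NM[measurable_cong, simp]: "sets (NM \<sigma> p) = sets borel"
  unfolding NM_def by simp

lemma space_NM[simp]: "space (NM \<sigma> p) = UNIV"
  unfolding NM_def by simp

lemma NM_k: "0 < \<sigma> (fst (snd p)) \<Longrightarrow> NM \<sigma> p = density lborel (normal_density 0 (\<sigma> (fst (snd p))))"
  unfolding NM_def by simp

lemma psf_NM: "product_sigma_finite (NM \<sigma>)"
  unfolding product_sigma_finite_def using prob_NM prob_space_imp_sigma_finite by blast

definition Kf :: "real \<Rightarrow> real \<Rightarrow> real \<Rightarrow> real" where
  "Kf g s u = exp(-g * u\<^sup>2/(1+2 * g * s\<^sup>2)) / sqrt(1+2 * g * s\<^sup>2)"

lemma Kf_bound: "0 \<le> g \<Longrightarrow> 0 \<le> Kf g s u \<and> Kf g s u \<le> 1"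
proof -
  assume g: "0 \<le> g"
  have q: "1 \<le> 1+2 * g * s\<^sup>2" using g by simp
  have "exp(-g * u\<^sup>2/(1+2 * g * s\<^sup>2)) \<le> 1" using g q by (simp add: divide_nonneg_pos)
  moreover have "1 \<le> sqrt(1+2 * g * s\<^sup>2)" using q by simp
  ultimately have "exp(-g * u\<^sup>2/(1+2 * g * s\<^sup>2)) \<le> sqrt(1+2 * g * s\<^sup>2)" by linarith
  moreover have "0 < sqrt(1+2 * g * s\<^sup>2)" using q by simp
  ultimately show ?thesis unfolding Kf_def by (simp add: divide_le_eq_1)
qed

lemma block_integral:
  fixes \<sigma> :: "nat \<Rightarrow> real" and g :: real and T :: "nat set"
  assumes g: "0 \<le> g" and sk: "0 < \<sigma> k" and k: "k \<in> {1..K}" and i: "i \<in> {1..N}"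
    and T: "T \<subseteq> {1..N}" "i \<notin> T"
  shows "(\<integral>z. (\<Prod>t\<in>T. exp (-g * (\<Sum>c\<in>{1..d}. (z(i,k,c) - z(t,k,c))\<^sup>2))) \<partial>PiM ({1..N}\<times>{1..K}\<times>{1..d}) (NM \<sigma>))
        = (\<integral>u. (Kf g (\<sigma> k) u)^card T \<partial>density lborel (normal_density 0 (\<sigma> k)))^d"
proof -
  interpret product_sigma_finite "NM \<sigma>" by (rule psf_NM)
  define P where "P = {1..N}\<times>{1..K}\<times>{1..d}"
  define B where "B = T \<times> {k} \<times> {1..d}"
  define R where "R = P - B"
  define Bi where "Bi = {i} \<times> {k} \<times> {(1::nat)..d}"
  define \<Phi> where "\<Phi> = density lborel (normal_density 0 (\<sigma> k))"
  have finT: "finite T" using T finite_subset by blast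
  have finP: "finite P" "finite B" "finite R" unfolding P_def B_def R_def using finT by auto
  have BP: "B \<subseteq> P" unfolding B_def P_def using T k by auto
  have PRB: "P = R \<union> B" "R \<inter> B = {}" unfolding R_def using BP by auto
  have BiR: "Bi \<subseteq> R" unfolding Bi_def R_def P_def B_def using i k T by auto
  have NMk: "NM \<sigma> p = \<Phi>" if "fst (snd p) = k" for p
    using NM_k[of \<sigma> p] sk that unfolding \<Phi>_def by simp
  have probP: "prob_space (PiM P (NM \<sigma>))" by (rule prob_space_PiM) (rule prob_NM)
  have probPhi: "prob_space \<Phi>" unfolding \<Phi>_def by (rule prob_space_normal_density) (rule sk)
  let ?f = "\<lambda>z. (\<Prod>t\<in>T. exp (-g * (\<Sum>c\<in>{1..d}. (z(i,k,c) - z(t,k,c))\<^sup>2)))"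
  have meas: "?f \<in> borel_measurable (PiM P (NM \<sigma>))"
  proof (rule borel_measurable_prod)
    fix t assume t: "t \<in> T"
    have "(\<lambda>z. \<Sum>c\<in>{1..d}. (z(i,k,c) - z(t,k,c))\<^sup>2) \<in> borel_measurable (PiM P (NM \<sigma>))"
    proof (rule borel_measurable_sum)
      fix c assume c: "c \<in> {1..d}"
      have m1: "(i,k,c) \<in> P" "(t,k,c) \<in> P" unfolding P_def using i k c t T by auto
      show "(\<lambda>z. (z(i,k,c) - z(t,k,c))\<^sup>2) \<in> borel_measurable (PiM P (NM \<sigma>))"
        using m1 by measurable
    qed
    then show "(\<lambda>z. exp (-g * (\<Sum>c\<in>{1..d}. (z(i,k,c) - z(t,k,c))\<^sup>2))) \<in> borel_measurable (PiM P (NM \<sigma>))"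
      by measurable
  qed
  have bnd: "norm (?f z) \<le> 1" for z
  proof -
    have "?f z \<le> 1" using g by (intro prod_le_1) (auto intro!: mult_nonneg_nonneg sum_nonneg)
    moreover have "0 \<le> ?f z" by (intro prod_nonneg) auto
    ultimately show ?thesis by simp
  qed
  have intf: "integrable (PiM (R \<union> B) (NM \<sigma>)) ?f"
    using probP meas bnd PRB(1)[symmetric]
    by (auto intro!: finite_measure.integrable_const_bound[where B=1] prob_space.finite_measure)
  have "(\<integral>z. ?f z \<partial>PiM P (NM \<sigma>)) = (\<integral>z. ?f z \<partial>PiM (R \<union> B) (NM \<sigma>))"
    using PRB by simp
  also have "\<dots> = (\<integral>x. (\<integral>y. ?f (merge R B (x, y)) \<partial>PiM B (NM \<sigma>)) \<partial>PiM R (NM \<sigma>))"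
    by (rule product_integral_fold[OF PRB(2) finP(3) finP(2) intf])
  also have "\<dots> = (\<integral>x. (\<Prod>p\<in>Bi. (Kf g (\<sigma> k) (x p))^card T) \<partial>PiM R (NM \<sigma>))"
  proof (rule Bochner_Integration.integral_cong[OF refl])
    fix x :: "nat \<times> nat \<times> nat \<Rightarrow> real"
    let ?h = "\<lambda>p v. exp (-g * (x(i,k,snd (snd p)) - v)\<^sup>2)"
    have inR: "(i,k,c) \<in> R" if "c \<in> {1..d}" for c
      using BiR that unfolding Bi_def by auto
    have inB: "(t,k,c) \<in> B" if "c \<in> {1..d}" "t \<in> T" for c t
      using that unfolding B_def by auto
    have "?f (merge R B (x, y)) = (\<Prod>t\<in>T. exp (-g * (\<Sum>c\<in>{1..d}. (x(i,k,c) - y(t,k,c))\<^sup>2)))" for y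
    proof (intro prod.cong refl arg_cong[where f=exp] arg_cong[where f="\<lambda>s. -g * s"] sum.cong)
      fix t c assume t: "t \<in> T" and c: "c \<in> {1..d}"
      have "(t,k,c) \<notin> R" using inB[OF c t] PRB(2) by auto
      then show "(merge R B (x, y) (i, k, c) - merge R B (x, y) (t, k, c))\<^sup>2 = (x (i, k, c) - y (t, k, c))\<^sup>2"
        using inR[OF c] inB[OF c t] by (simp add: merge_def)
    qed
    also have "\<dots> y = (\<Prod>t\<in>T. \<Prod>c\<in>{1..d}. exp (-g * (x(i,k,c) - y(t,k,c))\<^sup>2))" for y
      by (simp only: sum_distrib_left exp_sum finite_atLeastAtMost)
    also have "\<dots> y = (\<Prod>p\<in>B. ?h p (y p))" for y
      unfolding B_def using finT by (simp add: prod_triple)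
    finally have e1: "\<And>y. ?f (merge R B (x, y)) = (\<Prod>p\<in>B. ?h p (y p))" .
    have hint: "integrable (NM \<sigma> p) (?h p)" for p
      using prob_NM[of \<sigma> p] g
      by (intro finite_measure.integrable_const_bound[where B=1] prob_space.finite_measure)
         (auto simp: mult_nonneg_nonneg)
    have "(\<integral>y. ?f (merge R B (x, y)) \<partial>PiM B (NM \<sigma>)) = (\<integral>y. (\<Prod>p\<in>B. ?h p (y p)) \<partial>PiM B (NM \<sigma>))"
      by (simp only: e1)
    also have "\<dots> = (\<Prod>p\<in>B. integral\<^sup>L (NM \<sigma> p) (?h p))"
      by (rule product_integral_prod[OF finP(2) hint])
    also have "\<dots> = (\<Prod>p\<in>B. Kf g (\<sigma> k) (x(i,k,snd (snd p))))"
    proof (rule prod.cong[OF refl])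
      fix p assume p: "p \<in> B"
      then have "fst (snd p) = k" unfolding B_def by auto
      then have "NM \<sigma> p = \<Phi>" by (rule NMk)
      then show "integral\<^sup>L (NM \<sigma> p) (?h p) = Kf g (\<sigma> k) (x(i,k,snd (snd p)))"
        unfolding \<Phi>_def Kf_def using gauss_step[OF g sk] by simp
    qed
    also have "\<dots> = (\<Prod>t\<in>T. \<Prod>c\<in>{1..d}. Kf g (\<sigma> k) (x(i,k,c)))"
      unfolding B_def using finT by (simp add: prod_triple)
    also have "\<dots> = (\<Prod>c\<in>{1..d}. Kf g (\<sigma> k) (x(i,k,c)))^card T"
      by simp
    also have "\<dots> = (\<Prod>c\<in>{1..d}. (Kf g (\<sigma> k) (x(i,k,c)))^card T)"
      by (simp add: prod_power_distrib)
    also have "\<dots> = (\<Prod>p\<in>Bi. (Kf g (\<sigma> k) (x p))^card T)"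
      unfolding Bi_def by (simp add: prod_triple)
    finally show "(\<integral>y. ?f (merge R B (x, y)) \<partial>PiM B (NM \<sigma>)) = (\<Prod>p\<in>Bi. (Kf g (\<sigma> k) (x p))^card T)" .
  qed
  also have "\<dots> = (\<integral>x. (\<Prod>p\<in>R. (if p \<in> Bi then (\<lambda>v. (Kf g (\<sigma> k) v)^card T) else (\<lambda>v. 1)) (x p)) \<partial>PiM R (NM \<sigma>))"
  proof (rule Bochner_Integration.integral_cong[OF refl])
    fix x :: "nat \<times> nat \<times> nat \<Rightarrow> real"
    have "(\<Prod>p\<in>R. (if p \<in> Bi then (\<lambda>v. (Kf g (\<sigma> k) v)^card T) else (\<lambda>v. 1)) (x p))
        = (\<Prod>p\<in>R. (if p \<in> Bi then (Kf g (\<sigma> k) (x p))^card T else 1))"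
      by (rule prod.cong) auto
    also have "\<dots> = (\<Prod>p\<in>R \<inter> Bi. (Kf g (\<sigma> k) (x p))^card T)"
      using finP by (simp add: prod.inter_restrict)
    also have "R \<inter> Bi = Bi" using BiR by auto
    finally show "(\<Prod>p\<in>Bi. (Kf g (\<sigma> k) (x p))^card T) = (\<Prod>p\<in>R. (if p \<in> Bi then (\<lambda>v. (Kf g (\<sigma> k) v)^card T) else (\<lambda>v. 1)) (x p))"
      by simp
  qed
  also have "\<dots> = (\<Prod>p\<in>R. integral\<^sup>L (NM \<sigma> p) (if p \<in> Bi then (\<lambda>v. (Kf g (\<sigma> k) v)^card T) else (\<lambda>v. 1)))"
  proof (rule product_integral_prod[OF finP(3)])
    fix p
    have "(\<lambda>v. (Kf g (\<sigma> k) v)^card T) \<in> borel_measurable borel" unfolding Kf_def by measurable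
    then show "integrable (NM \<sigma> p) (if p \<in> Bi then (\<lambda>v. (Kf g (\<sigma> k) v)^card T) else (\<lambda>v. 1))"
      using prob_NM[of \<sigma> p] Kf_bound[OF g]
      by (intro finite_measure.integrable_const_bound[where B=1] prob_space.finite_measure)
         (auto simp: power_le_one)
  qed
  also have "\<dots> = (\<Prod>p\<in>R. if p \<in> Bi then (\<integral>u. (Kf g (\<sigma> k) u)^card T \<partial>\<Phi>) else 1)"
  proof (rule prod.cong[OF refl])
    fix p assume "p \<in> R"
    show "integral\<^sup>L (NM \<sigma> p) (if p \<in> Bi then (\<lambda>v. (Kf g (\<sigma> k) v)^card T) else (\<lambda>v. 1))
       = (if p \<in> Bi then (\<integral>u. (Kf g (\<sigma> k) u)^card T \<partial>\<Phi>) else 1)"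
    proof (cases "p \<in> Bi")
      case True
      then have "fst (snd p) = k" unfolding Bi_def by auto
      then show ?thesis using True NMk by simp
    next
      case False
      then show ?thesis using prob_space.prob_space[OF prob_NM[of \<sigma> p]] by simp
    qed
  qed
  also have "\<dots> = (\<integral>u. (Kf g (\<sigma> k) u)^card T \<partial>\<Phi>)^card Bi"
    using finP(3) prod.inter_restrict[of R "\<lambda>_. (\<integral>u. (Kf g (\<sigma> k) u)^card T \<partial>\<Phi>)" Bi] BiR
    by (simp add: Int_absorb1)
  also have "card Bi = d" unfolding Bi_def by (simp add: card_cartesian_product)
  finally show ?thesis unfolding P_def \<Phi>_def .
qed



lemma exp_taylor_bound: "\<bar>exp t - 1 - t\<bar> \<le> t\<^sup>2 * exp \<bar>t\<bar>" for t :: real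
proof -
  obtain \<tau> where tau: "\<bar>\<tau>\<bar> \<le> \<bar>t\<bar>" and e: "exp t = (\<Sum>m<2. (t ^ m) / fact m) + (exp \<tau> / fact 2) * t ^ 2"
    using Maclaurin_exp_le[of t 2] by blast
  have s2: "(\<Sum>m<2. (t ^ m) / fact m) = 1 + t" by (simp add: numeral_2_eq_2)
  have f2: "(fact 2 :: real) = 2" by (simp add: numeral_2_eq_2)
  have eq: "exp t - 1 - t = exp \<tau> / 2 * t\<^sup>2" using e s2 f2 by simp
  have "exp \<tau> \<le> exp \<bar>t\<bar>" using tau by simp
  then have "exp \<tau> / 2 \<le> exp \<bar>t\<bar>" using exp_gt_zero[of \<tau>] by linarith
  then have "exp \<tau> / 2 * t\<^sup>2 \<le> exp \<bar>t\<bar> * t\<^sup>2" by (rule mult_right_mono) simp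
  moreover have "0 \<le> exp \<tau> / 2 * t\<^sup>2" by simp
  ultimately show ?thesis unfolding eq by (simp add: mult.commute)
qed



lemma deriv_H:
  fixes M :: "'a measure" and L :: "'a \<Rightarrow> real"
  assumes P: "prob_space M" and Lm: "L \<in> borel_measurable M"
    and Lb: "\<And>z. z \<in> space M \<Longrightarrow> 0 \<le> L z \<and> L z \<le> C"
  shows "((\<lambda>x. \<integral>z. L z ^ m * exp ((x-1) * L z) \<partial>M) has_real_derivative
            (\<integral>z. L z ^ Suc m * exp ((x0-1) * L z) \<partial>M)) (at x0)"
proof -
  interpret prob_space M by (rule P)
  define H where "H n x = (\<integral>z. L z ^ n * exp ((x-1) * L z) \<partial>M)" for n x
  obtain z0 where "z0 \<in> space M" using not_empty by blast
  then have C0: "0 \<le> C" using Lb by force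
  have int: "integrable M (\<lambda>z. L z ^ n * exp ((x-1) * L z))" for n x
  proof (rule integrable_const_bound[where B="C^n * exp (\<bar>x-1\<bar> * C)"])
    show "AE z in M. norm (L z ^ n * exp ((x-1) * L z)) \<le> C^n * exp (\<bar>x-1\<bar> * C)"
    proof (rule AE_I2)
      fix z assume z: "z \<in> space M"
      have "(x-1) * L z \<le> \<bar>x-1\<bar> * L z" using Lb[OF z] by (intro mult_right_mono) auto
      also have "\<dots> \<le> \<bar>x-1\<bar> * C" using Lb[OF z] by (intro mult_left_mono) auto
      finally have "(x-1) * L z \<le> \<bar>x-1\<bar> * C" .
      then have "exp ((x-1) * L z) \<le> exp (\<bar>x-1\<bar> * C)" by simp
      moreover have "L z ^ n \<le> C ^ n" using Lb[OF z] by (simp add: power_mono)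
      ultimately show "norm (L z ^ n * exp ((x-1) * L z)) \<le> C^n * exp (\<bar>x-1\<bar> * C)"
        using Lb[OF z] by (simp add: abs_mult mult_mono)
    qed
    show "(\<lambda>z. L z ^ n * exp ((x-1) * L z)) \<in> borel_measurable M" using Lm by measurable
  qed
  define Kc where "Kc = C^m * exp (\<bar>x0-1\<bar> * C) * C\<^sup>2 * exp C"
  have bound: "\<bar>(H m y - H m x0)/(y-x0) - H (Suc m) x0\<bar> \<le> Kc * \<bar>y - x0\<bar>"
    if y: "y \<noteq> x0" "\<bar>y-x0\<bar> \<le> 1" for y
  proof -
    define h where "h = y - x0"
    have h0: "h \<noteq> 0" using y unfolding h_def by simp
    define F where "F z = L z ^ m * exp ((x0-1) * L z) * ((exp (h * L z) - 1 - h * L z) / h)" for z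
    have Fm: "F \<in> borel_measurable M" unfolding F_def using Lm by measurable
    have eqF: "L z ^ m * exp ((y-1) * L z) - L z ^ m * exp ((x0-1) * L z) - h * (L z ^ Suc m * exp ((x0-1) * L z))
        = h * F z" for z
    proof -
      have "exp ((y-1) * L z) = exp ((x0-1) * L z) * exp (h * L z)"
        unfolding h_def by (simp add: exp_add[symmetric] algebra_simps)
      then show ?thesis unfolding F_def using h0 by (simp add: field_simps)
    qed
    have "H m y - H m x0 - h * H (Suc m) x0 = (\<integral>z. h * F z \<partial>M)"
    proof -
      have "(\<integral>z. h * F z \<partial>M) = (\<integral>z. L z ^ m * exp ((y-1) * L z) - L z ^ m * exp ((x0-1) * L z) - h * (L z ^ Suc m * exp ((x0-1) * L z)) \<partial>M)"
        by (simp only: eqF)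
      also have "\<dots> = (\<integral>z. L z ^ m * exp ((y-1) * L z) - L z ^ m * exp ((x0-1) * L z) \<partial>M) - (\<integral>z. h * (L z ^ Suc m * exp ((x0-1) * L z)) \<partial>M)"
        using int[of "Suc m" x0] by (intro Bochner_Integration.integral_diff) (auto intro!: int Bochner_Integration.integrable_diff simp del: power_Suc)
      also have "\<dots> = H m y - H m x0 - h * H (Suc m) x0"
      proof -
        have i3: "integrable M (\<lambda>x. L x * L x ^ m * exp ((x0 - 1) * L x))" using int[of "Suc m" x0] by simp
        show ?thesis unfolding H_def
          using i3 by (subst Bochner_Integration.integral_diff) (auto intro!: int)
      qed
      finally show ?thesis by simp
    qed
    then have "H m y - H m x0 - h * H (Suc m) x0 = h * (\<integral>z. F z \<partial>M)"
      by (simp only: integral_mult_right_zero)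
    then have "(H m y - H m x0)/h - H (Suc m) x0 = (\<integral>z. F z \<partial>M)"
      using h0 by (simp add: field_simps)
    then have eq2: "(H m y - H m x0)/(y-x0) - H (Suc m) x0 = (\<integral>z. F z \<partial>M)"
      unfolding h_def .
    have Fb: "\<bar>F z\<bar> \<le> Kc * \<bar>h\<bar>" if z: "z \<in> space M" for z
    proof -
      have Lz: "0 \<le> L z" "L z \<le> C" using Lb[OF z] by auto
      have "\<bar>h\<bar> * L z \<le> 1 * L z" using Lz y unfolding h_def by (intro mult_right_mono) auto
      then have hL: "\<bar>h * L z\<bar> \<le> C" using Lz by (simp add: abs_mult)
      have a1: "\<bar>L z ^ m * exp ((x0-1) * L z)\<bar> \<le> C^m * exp (\<bar>x0-1\<bar> * C)"
      proof -
        have "(x0-1) * L z \<le> \<bar>x0-1\<bar> * L z" using Lz by (intro mult_right_mono) auto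
        also have "\<dots> \<le> \<bar>x0-1\<bar> * C" using Lz by (intro mult_left_mono) auto
        finally have "(x0-1) * L z \<le> \<bar>x0-1\<bar> * C" .
        then have "exp ((x0-1) * L z) \<le> exp (\<bar>x0-1\<bar> * C)" by simp
        moreover have "L z ^ m \<le> C ^ m" using Lz by (simp add: power_mono)
        ultimately show ?thesis using Lz by (simp add: abs_mult mult_mono)
      qed
      have a2: "\<bar>(exp (h * L z) - 1 - h * L z) / h\<bar> \<le> C\<^sup>2 * exp C * \<bar>h\<bar>"
      proof -
        have "\<bar>exp (h * L z) - 1 - h * L z\<bar> \<le> (h * L z)\<^sup>2 * exp \<bar>h * L z\<bar>" by (rule exp_taylor_bound)
        also have "\<dots> \<le> (h * C)\<^sup>2 * exp C"
        proof (rule mult_mono)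
          show "(h * L z)\<^sup>2 \<le> (h * C)\<^sup>2" using Lz
            by (simp add: power_mult_distrib mult_left_mono power_mono)
        qed (use hL in auto)
        finally have "\<bar>exp (h * L z) - 1 - h * L z\<bar> \<le> h\<^sup>2 * C\<^sup>2 * exp C" by (simp add: power_mult_distrib)
        then have "\<bar>exp (h * L z) - 1 - h * L z\<bar> / \<bar>h\<bar> \<le> h\<^sup>2 * C\<^sup>2 * exp C / \<bar>h\<bar>"
          by (simp add: divide_right_mono)
        also have "h\<^sup>2 * C\<^sup>2 * exp C / \<bar>h\<bar> = C\<^sup>2 * exp C * \<bar>h\<bar>"
          using h0 by (simp add: power2_eq_square field_simps abs_mult_self_eq)
        finally show ?thesis by (simp add: abs_divide)
      qed
      have "\<bar>F z\<bar> = \<bar>L z ^ m * exp ((x0-1) * L z)\<bar> * \<bar>(exp (h * L z) - 1 - h * L z) / h\<bar>"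
        unfolding F_def by (simp add: abs_mult)
      also have "\<dots> \<le> C^m * exp (\<bar>x0-1\<bar> * C) * (C\<^sup>2 * exp C * \<bar>h\<bar>)"
        using a1 a2 by (intro mult_mono) auto
      also have "\<dots> = Kc * \<bar>h\<bar>" unfolding Kc_def by simp
      finally show ?thesis .
    qed
    have intF: "integrable M F"
      by (rule integrable_const_bound[where B="Kc * \<bar>h\<bar>"]) (use Fb Fm in auto)
    have "\<bar>\<integral>z. F z \<partial>M\<bar> \<le> (\<integral>z. norm (F z) \<partial>M)"
      using integral_norm_bound[of M F] by simp
    also have "\<dots> \<le> Kc * \<bar>h\<bar>"
      using Fb intF by (intro integral_le_const) (auto intro!: AE_I2)
    finally show ?thesis using eq2 unfolding h_def by simp
  qed
  have "((\<lambda>y. (H m y - H m x0)/(y-x0) - H (Suc m) x0) \<longlongrightarrow> 0) (at x0)"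
  proof (rule Lim_null_comparison)
    show "\<forall>\<^sub>F y in at x0. norm ((H m y - H m x0)/(y-x0) - H (Suc m) x0) \<le> Kc * \<bar>y - x0\<bar>"
      unfolding eventually_at
      by (rule exI[of _ 1]) (auto simp: dist_real_def intro!: bound)
    have "((\<lambda>y. Kc * \<bar>y - x0\<bar>) \<longlongrightarrow> Kc * \<bar>x0 - x0\<bar>) (at x0)"
      by (intro tendsto_intros)
    then show "((\<lambda>y. Kc * \<bar>y - x0\<bar>) \<longlongrightarrow> 0) (at x0)" by simp
  qed
  then have "((\<lambda>y. (H m y - H m x0)/(y-x0)) \<longlongrightarrow> H (Suc m) x0) (at x0)"
    by (simp add: LIM_zero_iff)
  then show ?thesis unfolding has_field_derivative_iff H_def .
qed



lemma poisson_pgf: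
  assumes r: "0 < r" and x: "0 \<le> x"
  shows "has_bochner_integral (measure_pmf (poisson_pmf r)) (\<lambda>n. x ^ n) (exp (r * (x - 1)))"
proof (rule has_bochner_integral_nn_integral)
  show "(\<lambda>n. x^n) \<in> borel_measurable (measure_pmf (poisson_pmf r))" by simp
  show "AE n in measure_pmf (poisson_pmf r). 0 \<le> x^n" using x by simp
  show "0 \<le> exp (r * (x - 1))" by simp
  have s: "(\<lambda>n. pmf (poisson_pmf r) n * x^n) sums exp (r * (x - 1))"
  proof -
    have "(\<lambda>n. exp (-r) * ((r * x)^n /\<^sub>R fact n)) sums (exp (-r) * exp (r * x))"
      by (intro sums_mult exp_converges)
    moreover have "exp (-r) * ((r * x)^n /\<^sub>R fact n) = pmf (poisson_pmf r) n * x^n" for n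
      using r by (simp add: power_mult_distrib field_simps)
    moreover have "exp (-r) * exp (r * x) = exp (r * (x - 1))"
      by (simp add: exp_add[symmetric] algebra_simps)
    ultimately show ?thesis by simp
  qed
  have "(\<integral>\<^sup>+n. ennreal (x^n) \<partial>measure_pmf (poisson_pmf r))
      = (\<integral>\<^sup>+n. ennreal (pmf (poisson_pmf r) n * x^n) \<partial>count_space UNIV)"
    unfolding nn_integral_measure_pmf using x by (simp add: ennreal_mult'')
  also have "\<dots> = (\<Sum>n. ennreal (pmf (poisson_pmf r) n * x^n))"
    by (rule nn_integral_count_space_nat)
  also have "\<dots> = ennreal (\<Sum>n. pmf (poisson_pmf r) n * x^n)"
    using x s by (intro suminf_ennreal2) (auto simp: sums_summable)
  also have "\<dots> = ennreal (exp (r * (x - 1)))" using s sums_unique by metis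
  finally show "(\<integral>\<^sup>+n. ennreal (x^n) \<partial>measure_pmf (poisson_pmf r)) = ennreal (exp (r * (x - 1)))" .
qed

lemma inner_pgf:
  fixes lam :: "nat \<times> nat \<Rightarrow> real" and x :: real
  assumes x: "0 \<le> x" and lam: "\<And>p. 0 < lam p" and i: "i \<in> {1..N}"
  shows "(\<integral>y. x ^ strength N i y \<partial>PiM (node_pairs N) (\<lambda>p. measure_pmf (poisson_pmf (lam p))))
       = exp ((x - 1) * (\<Sum>j\<in>{1..N}-{i}. lam (min i j, max i j)))"
proof -
  interpret product_sigma_finite "\<lambda>p. measure_pmf (poisson_pmf (lam p))"
    unfolding product_sigma_finite_def by (auto intro: prob_space_imp_sigma_finite prob_space_measure_pmf)
  define J0 where "J0 = {1..N}-{i}"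
  define pr where "pr j = (min i j, max i j)" for j
  define E where "E = pr ` J0"
  define NP where "NP = node_pairs N"
  have finNP: "finite NP" unfolding NP_def node_pairs_def
    by (rule finite_subset[of _ "{1..N}\<times>{1..N}"]) auto
  have finJ: "finite J0" unfolding J0_def by simp
  have inj: "inj_on pr J0" unfolding inj_on_def pr_def J0_def
    by (auto simp: min_def max_def split: if_splits)
  have ENP: "E \<subseteq> NP" unfolding E_def NP_def node_pairs_def pr_def J0_def using i
    by (auto simp: min_def max_def)
  let ?f = "\<lambda>p. if p \<in> E then (\<lambda>n::nat. x ^ n) else (\<lambda>n. 1)"
  have pw: "x ^ strength N i y = (\<Prod>p\<in>NP. ?f p (y p))" for y
  proof -
    have "x ^ strength N i y = (\<Prod>j\<in>J0. x ^ y (pr j))"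
      unfolding strength_def J0_def pr_def by (rule power_sum)
    also have "\<dots> = (\<Prod>p\<in>E. x ^ y p)"
      unfolding E_def using prod.reindex[OF inj, of "\<lambda>p. x ^ y p"] by simp
    also have "\<dots> = (\<Prod>p\<in>NP. if p \<in> E then x ^ y p else 1)"
      using finNP ENP prod.inter_restrict[of NP "\<lambda>p. x ^ y p" E] by (simp add: Int_absorb1 Int_absorb2)
    also have "\<dots> = (\<Prod>p\<in>NP. ?f p (y p))" by (rule prod.cong) auto
    finally show ?thesis .
  qed
  have intf: "integrable (measure_pmf (poisson_pmf (lam p))) (?f p)"
    and intv: "integral\<^sup>L (measure_pmf (poisson_pmf (lam p))) (?f p) = (if p \<in> E then exp (lam p * (x - 1)) else 1)" for p
  proof -
    have hb: "has_bochner_integral (measure_pmf (poisson_pmf (lam p))) (?f p) (if p \<in> E then exp (lam p * (x - 1)) else 1)"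
    proof (cases "p \<in> E")
      case True then show ?thesis using poisson_pgf[OF lam x] by simp
    next
      case False
      interpret prob_space "measure_pmf (poisson_pmf (lam p))" by (rule prob_space_measure_pmf)
      have "has_bochner_integral (measure_pmf (poisson_pmf (lam p))) (\<lambda>n. 1::real) 1"
        using has_bochner_integral_integrable[of "measure_pmf (poisson_pmf (lam p))" "\<lambda>n. 1::real"] by simp
      then show ?thesis using False by simp
    qed
    show "integrable (measure_pmf (poisson_pmf (lam p))) (?f p)" using hb by (rule integrable.intros)
    show "integral\<^sup>L (measure_pmf (poisson_pmf (lam p))) (?f p) = (if p \<in> E then exp (lam p * (x - 1)) else 1)"
      using hb by (rule has_bochner_integral_integral_eq)
  qed
  have "(\<integral>y. x ^ strength N i y \<partial>PiM NP (\<lambda>p. measure_pmf (poisson_pmf (lam p))))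
      = (\<integral>y. (\<Prod>p\<in>NP. ?f p (y p)) \<partial>PiM NP (\<lambda>p. measure_pmf (poisson_pmf (lam p))))"
    by (simp only: pw)
  also have "\<dots> = (\<Prod>p\<in>NP. integral\<^sup>L (measure_pmf (poisson_pmf (lam p))) (?f p))"
    by (rule product_integral_prod[OF finNP intf])
  also have "\<dots> = (\<Prod>p\<in>NP. if p \<in> E then exp (lam p * (x - 1)) else 1)"
    by (simp only: intv)
  also have "\<dots> = (\<Prod>p\<in>E. exp (lam p * (x - 1)))"
    using finNP ENP prod.inter_restrict[of NP "\<lambda>p. exp (lam p * (x - 1))" E] by (simp add: Int_absorb1 Int_absorb2)
  also have "\<dots> = exp (\<Sum>p\<in>E. lam p * (x - 1))"
    using finite_subset[OF ENP finNP] by (rule exp_sum[symmetric])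
  also have "(\<Sum>p\<in>E. lam p * (x - 1)) = (\<Sum>j\<in>J0. lam (pr j) * (x - 1))"
    unfolding E_def using sum.reindex[OF inj, of "\<lambda>p. lam p * (x - 1)"] by simp
  also have "\<dots> = (x - 1) * (\<Sum>j\<in>J0. lam (pr j))"
    by (simp add: sum_distrib_left mult.commute)
  finally show ?thesis unfolding NP_def J0_def pr_def .
qed



lemma gauss0: "0 \<le> c \<Longrightarrow> 0 < s \<Longrightarrow> (\<integral>v. exp (-c * v\<^sup>2) \<partial>density lborel (normal_density 0 s)) = 1 / sqrt (1 + 2 * c * s\<^sup>2)"
  using gauss_step[of c s 0] by simp

lemma J1_val:
  assumes g: "0 \<le> g" and s: "0 < s"
  shows "(\<integral>u. (Kf g s u)^1 \<partial>density lborel (normal_density 0 s)) = 1 / sqrt (1 + 4 * g * s\<^sup>2)"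
proof -
  define q where "q = 1 + 2 * g * s\<^sup>2"
  have q: "0 < q" unfolding q_def using g by (simp add: add_pos_nonneg)
  have c: "0 \<le> g / q" using g q by simp
  have "(\<integral>u. (Kf g s u)^1 \<partial>density lborel (normal_density 0 s)) = (\<integral>u. (1 / sqrt q) * exp (-(g/q) * u\<^sup>2) \<partial>density lborel (normal_density 0 s))"
    unfolding Kf_def q_def by (simp add: field_simps)
  also have "\<dots> = (1 / sqrt q) * (1 / sqrt (1 + 2 * (g/q) * s\<^sup>2))"
    using gauss0[OF c s] by simp
  also have "\<dots> = 1 / sqrt (q * (1 + 2 * (g/q) * s\<^sup>2))" by (simp add: real_sqrt_mult)
  also have "q * (1 + 2 * (g/q) * s\<^sup>2) = 1 + 4 * g * s\<^sup>2" using q unfolding q_def by (simp add: field_simps)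
  finally show ?thesis .
qed

lemma J2_val:
  assumes g: "0 \<le> g" and s: "0 < s"
  shows "(\<integral>u. (Kf g s u)^2 \<partial>density lborel (normal_density 0 s)) = 1 / (sqrt (1 + 2 * g * s\<^sup>2) * sqrt (1 + 6 * g * s\<^sup>2))"
proof -
  define q where "q = 1 + 2 * g * s\<^sup>2"
  have q: "0 < q" unfolding q_def using g by (simp add: add_pos_nonneg)
  have c: "0 \<le> 2 * g / q" using g q by simp
  have sq: "(Kf g s u)^2 = (1 / q) * exp (-(2 * g / q) * u\<^sup>2)" for u
  proof -
    have "(Kf g s u)^2 = exp (-g * u\<^sup>2 / q)^2 / (sqrt q)^2" unfolding Kf_def q_def by (simp add: power_divide)
    also have "exp (-g * u\<^sup>2 / q)^2 = exp (-(2 * g / q) * u\<^sup>2)"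
      by (simp add: exp_add[symmetric] power2_eq_square field_simps)
    also have "(sqrt q)^2 = q" using q by simp
    finally show ?thesis by simp
  qed
  have "(\<integral>u. (Kf g s u)^2 \<partial>density lborel (normal_density 0 s)) = (\<integral>u. (1 / q) * exp (-(2 * g / q) * u\<^sup>2) \<partial>density lborel (normal_density 0 s))"
    by (simp only: sq)
  also have "\<dots> = (1 / q) * (1 / sqrt (1 + 2 * (2 * g / q) * s\<^sup>2))"
    using gauss0[OF c s] by simp
  also have "\<dots> = 1 / (sqrt q * sqrt (q * (1 + 2 * (2 * g / q) * s\<^sup>2)))"
  proof -
    have qq: "sqrt q * sqrt q = q" using q by simp
    have "(1 / q) * (1 / sqrt (1 + 2 * (2 * g / q) * s\<^sup>2)) = 1 / ((sqrt q * sqrt q) * sqrt (1 + 2 * (2 * g / q) * s\<^sup>2))"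
      by (simp only: qq) simp
    also have "\<dots> = 1 / (sqrt q * sqrt (q * (1 + 2 * (2 * g / q) * s\<^sup>2)))"
      by (simp only: real_sqrt_mult mult.assoc)
    finally show ?thesis .
  qed
  also have "q * (1 + 2 * (2 * g / q) * s\<^sup>2) = 1 + 6 * g * s\<^sup>2" using q unfolding q_def by (simp add: field_simps)
  finally show ?thesis unfolding q_def .
qed

lemma inv_sqrt_pow: "0 < x \<Longrightarrow> (1 / sqrt x) ^ d = x powr (- real d / 2)"
proof -
  assume x: "0 < x"
  have "1 / sqrt x = x powr (- (1/2))" using x by (simp add: powr_minus_divide powr_half_sqrt)
  then have "(1 / sqrt x) ^ d = x powr (real d * (- (1/2)))" using x by (simp add: powr_power)
  also have "real d * (- (1/2)) = - real d / 2" by simp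
  finally show ?thesis .
qed

lemma D_meas:
  assumes "i \<in> {1..N}" "j \<in> {1..N}" "k \<in> {1..K}"
  shows "(\<lambda>z. \<Sum>c\<in>{1..d}. (z(i,k,c) - z(j,k,c))\<^sup>2) \<in> borel_measurable (PiM ({1..N}\<times>{1..K}\<times>{1..d}) (NM \<sigma>))"
proof (rule borel_measurable_sum)
  fix c assume c: "c \<in> {1..d}"
  have m1: "(i,k,c) \<in> {1..N}\<times>{1..K}\<times>{1..d}" "(j,k,c) \<in> {1..N}\<times>{1..K}\<times>{1..d}" using assms c by auto
  show "(\<lambda>z. (z(i,k,c) - z(j,k,c))\<^sup>2) \<in> borel_measurable (PiM ({1..N}\<times>{1..K}\<times>{1..d}) (NM \<sigma>))"
    using m1 by measurable
qed

theorem mainTheorem2: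
  fixes N K d :: nat and \<beta> a :: real and \<alpha> \<sigma> :: "nat \<Rightarrow> real" and i k :: nat
  assumes "N \<ge> 2" and "d \<ge> 1" and "\<beta> > 0"
    and "\<forall>k'\<in>{1..K}. \<sigma> k' > 0"
    and "\<forall>i'\<in>{1..N}. \<forall>j'\<in>{1..N}. i' \<noteq> j' \<longrightarrow> \<alpha> i' + \<alpha> j' = a"
    and "i \<in> {1..N}" and "k \<in> {1..K}"
  shows "(\<forall>\<^sub>F x in nhds 1. cond_pgf N K d \<sigma> \<alpha> \<beta> k i differentiable at x)
    \<and> (deriv (cond_pgf N K d \<sigma> \<alpha> \<beta> k i) has_real_derivative
         exp (2 * a) * (real N - 1) * (8 * (\<sigma> k)\<^sup>2 * \<beta> + 1) powr (- real d / 2)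
         + (real N - 1) * (real N - 2) * exp (2 * a)
             * (2 * (\<sigma> k)\<^sup>2 * \<beta> + 1) powr (- real d / 2)
             * (6 * (\<sigma> k)\<^sup>2 * \<beta> + 1) powr (- real d / 2)) (at 1)"
proof -
  note N2 = assms(1) and bpos = assms(3) and spos = assms(4) and alph = assms(5) and i = assms(6) and k = assms(7)
  define s where "s = \<sigma> k"
  have s: "0 < s" using spos k unfolding s_def by blast
  define P where "P = {1..N}\<times>{1..K}\<times>{(1::nat)..d}"
  define \<mu> where "\<mu> = PiM P (NM \<sigma>)"
  have lat: "latent_measure N K d \<sigma> = \<mu>"
    unfolding latent_measure_def \<mu>_def P_def
    by (rule PiM_cong) (use spos in \<open>auto simp: NM_def\<close>)
  have prob\<mu>: "prob_space \<mu>" unfolding \<mu>_def by (rule prob_space_PiM) (rule prob_NM)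
  define J0 where "J0 = {1..N} - {i}"
  have finJ0: "finite J0" unfolding J0_def by simp
  have cardJ0: "card J0 = N - 1" unfolding J0_def using i by simp
  define D where "D z j = (\<Sum>c\<in>{1..d}. (z(i,k,c) - z(j,k,c))\<^sup>2)" for z :: "nat \<times> nat \<times> nat \<Rightarrow> real" and j
  have D0: "0 \<le> D z j" for z j unfolding D_def by (simp add: sum_nonneg)
  define Lz where "Lz z = (\<Sum>j\<in>J0. exp a * exp (-\<beta> * D z j))" for z
  have rate: "edge_rate K d \<alpha> \<beta> z k (min i j) (max i j) = exp a * exp (-\<beta> * D z j)" if j: "j \<in> J0" for z j
  proof -
    have ij: "min i j \<noteq> max i j" "min i j \<in> {1..N}" "max i j \<in> {1..N}" using j i unfolding J0_def
      by (auto simp: min_def max_def)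
    have as: "\<alpha> (min i j) + \<alpha> (max i j) = a" using alph ij by blast
    have ssum: "(\<Sum>k'\<in>{1..K}. of_bool (k = k') * \<beta> * latent_sqdist d z k' (min i j) (max i j))
         = \<beta> * latent_sqdist d z k (min i j) (max i j)"
    proof -
      have "(\<Sum>k'\<in>{1..K}. of_bool (k = k') * \<beta> * latent_sqdist d z k' (min i j) (max i j))
          = (\<Sum>k'\<in>{1..K}. if k = k' then \<beta> * latent_sqdist d z k' (min i j) (max i j) else 0)"
        by (rule sum.cong) auto
      also have "\<dots> = \<beta> * latent_sqdist d z k (min i j) (max i j)"
        using k sum.delta[of "{1..K}" k "\<lambda>k'. \<beta> * latent_sqdist d z k' (min i j) (max i j)"] by simp
      finally show ?thesis .
    qed
    have sq: "latent_sqdist d z k (min i j) (max i j) = D z j"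
      unfolding latent_sqdist_def D_def by (rule sum.cong) (auto simp: min_def max_def power2_commute)
    have "edge_rate K d \<alpha> \<beta> z k (min i j) (max i j) = exp (a + (-\<beta> * D z j))"
      unfolding edge_rate_def as ssum sq by simp
    then show ?thesis by (simp only: exp_add)
  qed
  have Lz_eq: "(\<Sum>j\<in>J0. edge_rate K d \<alpha> \<beta> z k (min i j) (max i j)) = Lz z" for z
    unfolding Lz_def by (rule sum.cong) (auto simp: rate)
  have Dm: "(\<lambda>z. D z j) \<in> borel_measurable \<mu>" if "j \<in> J0" for j
    unfolding D_def \<mu>_def P_def using that i k unfolding J0_def by (intro D_meas) auto
  have Lm: "Lz \<in> borel_measurable \<mu>"
    unfolding Lz_def by (rule borel_measurable_sum) (use Dm in measurable)
  have Lb: "0 \<le> Lz z \<and> Lz z \<le> real N * exp a" for z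
  proof
    show "0 \<le> Lz z" unfolding Lz_def by (simp add: sum_nonneg)
    have "Lz z \<le> real (card J0) * exp a"
      unfolding Lz_def
    proof (rule sum_bounded_above)
      fix j show "exp a * exp (-\<beta> * D z j) \<le> exp a" using bpos D0[of z j] by (simp add: mult_nonneg_nonneg)
    qed
    also have "\<dots> \<le> real N * exp a" using cardJ0 by simp
    finally show "Lz z \<le> real N * exp a" .
  qed
  define Hf where "Hf m x = (\<integral>z. Lz z ^ m * exp ((x-1) * Lz z) \<partial>\<mu>)" for m x
  have dH: "(Hf m has_real_derivative Hf (Suc m) x) (at x)" for m x
    unfolding Hf_def by (rule deriv_H[OF prob\<mu> Lm]) (use Lb in auto)
  let ?F = "cond_pgf N K d \<sigma> \<alpha> \<beta> k i"
  have FH: "?F x = Hf 0 x" if x: "0 < x" for x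
  proof -
    have "?F x = (\<integral>z. (\<integral>y. x ^ strength N i y \<partial>weights_measure N K d \<alpha> \<beta> z k) \<partial>\<mu>)"
      unfolding cond_pgf_def lat ..
    also have "\<dots> = (\<integral>z. exp ((x-1) * Lz z) \<partial>\<mu>)"
    proof (rule Bochner_Integration.integral_cong[OF refl])
      fix z
      have wm: "weights_measure N K d \<alpha> \<beta> z k = PiM (node_pairs N) (\<lambda>p. measure_pmf (poisson_pmf (edge_rate K d \<alpha> \<beta> z k (fst p) (snd p))))"
        unfolding weights_measure_def by (rule PiM_cong) (auto simp: split_beta)
      have "(\<integral>y. x ^ strength N i y \<partial>weights_measure N K d \<alpha> \<beta> z k)
          = exp ((x - 1) * (\<Sum>j\<in>{1..N}-{i}. edge_rate K d \<alpha> \<beta> z k (fst (min i j, max i j)) (snd (min i j, max i j))))"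
        unfolding wm using x i by (intro inner_pgf) (auto simp: edge_rate_def)
      also have "\<dots> = exp ((x-1) * Lz z)" using Lz_eq[of z] unfolding J0_def by simp
      finally show "(\<integral>y. x ^ strength N i y \<partial>weights_measure N K d \<alpha> \<beta> z k) = exp ((x-1) * Lz z)" .
    qed
    also have "\<dots> = Hf 0 x" unfolding Hf_def by simp
    finally show ?thesis .
  qed
  have dF: "(?F has_real_derivative Hf 1 x) (at x)" if "0 < x" for x
  proof -
    have d0: "(Hf 0 has_real_derivative Hf 1 x) (at x)" using dH[of 0 x] by simp
    show ?thesis
      by (rule has_field_derivative_transform_within_open[OF d0 open_greaterThan[of 0]])
         (use that FH in auto)
  qed
  have ev: "\<forall>\<^sub>F x in nhds 1. ?F differentiable at x"
  proof -
    have "\<forall>\<^sub>F x in nhds (1::real). x \<in> {0<..}" by (rule eventually_nhds_in_open) auto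
    then show ?thesis
      by (rule eventually_mono) (auto intro: differentiableI has_field_derivative_imp_has_derivative dF)
  qed
  have dd: "(deriv ?F has_real_derivative Hf 2 1) (at 1)"
  proof (rule has_field_derivative_transform_within_open[OF _ open_greaterThan[of 0]])
    show "(Hf 1 has_real_derivative Hf 2 1) (at 1)" using dH[of 1 1] by (simp add: numeral_2_eq_2)
    show "(1::real) \<in> {0<..}" by simp
    fix y :: real assume "y \<in> {0<..}"
    then show "Hf 1 y = deriv ?F y" using dF[of y] by (simp add: DERIV_imp_deriv)
  qed
  define ea where "ea = exp a"
  define Av where "Av = exp (2 * a) * (8 * s\<^sup>2 * \<beta> + 1) powr (- real d / 2)"
  define Bv where "Bv = exp (2 * a) * (2 * s\<^sup>2 * \<beta> + 1) powr (- real d / 2) * (6 * s\<^sup>2 * \<beta> + 1) powr (- real d / 2)"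
  define f where "f z j l = ea * exp (-\<beta> * D z j) * (ea * exp (-\<beta> * D z l))" for z j l
  have fint: "integrable \<mu> (\<lambda>z. f z j l)" if "j \<in> J0" "l \<in> J0" for j l
  proof -
    interpret prob_space \<mu> by (rule prob\<mu>)
    show ?thesis
    proof (rule integrable_const_bound[where B="ea * ea"])
      show "AE z in \<mu>. norm (f z j l) \<le> ea * ea"
      proof (rule AE_I2)
        fix z
        have "exp (-\<beta> * D z j) \<le> 1" "exp (-\<beta> * D z l) \<le> 1" using bpos D0 by (auto simp: mult_nonneg_nonneg)
        then show "norm (f z j l) \<le> ea * ea" unfolding f_def ea_def
          by (simp add: mult_mono mult_le_one abs_mult)
      qed
      show "(\<lambda>z. f z j l) \<in> borel_measurable \<mu>" unfolding f_def using Dm[OF that(1)] Dm[OF that(2)] by measurable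
    qed
  qed
  have fA: "(\<integral>z. f z j j \<partial>\<mu>) = Av" if j: "j \<in> J0" for j
  proof -
    have "f z j j = exp (2 * a) * (\<Prod>t\<in>{j}. exp (-(2 * \<beta>) * (\<Sum>c\<in>{1..d}. (z(i,k,c) - z(t,k,c))\<^sup>2)))" for z
      unfolding f_def ea_def D_def by (simp add: exp_add[symmetric] algebra_simps)
    then have "(\<integral>z. f z j j \<partial>\<mu>) = exp (2 * a) * (\<integral>z. (\<Prod>t\<in>{j}. exp (-(2 * \<beta>) * (\<Sum>c\<in>{1..d}. (z(i,k,c) - z(t,k,c))\<^sup>2))) \<partial>\<mu>)"
      by simp
    also have "(\<integral>z. (\<Prod>t\<in>{j}. exp (-(2 * \<beta>) * (\<Sum>c\<in>{1..d}. (z(i,k,c) - z(t,k,c))\<^sup>2))) \<partial>\<mu>)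
        = (\<integral>u. (Kf (2 * \<beta>) (\<sigma> k) u)^card {j} \<partial>density lborel (normal_density 0 (\<sigma> k)))^d"
      unfolding \<mu>_def P_def using bpos s i k j unfolding s_def J0_def by (intro block_integral) auto
    also have "\<dots> = (1 / sqrt (1 + 4 * (2 * \<beta>) * s\<^sup>2))^d"
      using J1_val[of "2 * \<beta>" s] bpos s unfolding s_def by simp
    also have "\<dots> = (1 + 4 * (2 * \<beta>) * s\<^sup>2) powr (- real d / 2)"
      using bpos by (intro inv_sqrt_pow) (simp add: add_pos_nonneg)
    finally show ?thesis unfolding Av_def by (simp add: algebra_simps)
  qed
  have fB: "(\<integral>z. f z j l \<partial>\<mu>) = Bv" if j: "j \<in> J0" and l: "l \<in> J0" and jl: "j \<noteq> l" for j l
  proof -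
    have "f z j l = exp (2 * a) * (\<Prod>t\<in>{j,l}. exp (-\<beta> * (\<Sum>c\<in>{1..d}. (z(i,k,c) - z(t,k,c))\<^sup>2)))" for z
      unfolding f_def ea_def D_def using jl by (simp add: exp_add[symmetric] algebra_simps)
    then have "(\<integral>z. f z j l \<partial>\<mu>) = exp (2 * a) * (\<integral>z. (\<Prod>t\<in>{j,l}. exp (-\<beta> * (\<Sum>c\<in>{1..d}. (z(i,k,c) - z(t,k,c))\<^sup>2))) \<partial>\<mu>)"
      by simp
    also have "(\<integral>z. (\<Prod>t\<in>{j,l}. exp (-\<beta> * (\<Sum>c\<in>{1..d}. (z(i,k,c) - z(t,k,c))\<^sup>2))) \<partial>\<mu>)
        = (\<integral>u. (Kf \<beta> (\<sigma> k) u)^card {j,l} \<partial>density lborel (normal_density 0 (\<sigma> k)))^d"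
      unfolding \<mu>_def P_def using bpos s i k j l unfolding s_def J0_def by (intro block_integral) auto
    also have "\<dots> = (1 / (sqrt (1 + 2 * \<beta> * s\<^sup>2) * sqrt (1 + 6 * \<beta> * s\<^sup>2)))^d"
    proof -
      have c2: "card {j,l} = 2" using jl by simp
      have jv: "(\<integral>u. (Kf \<beta> (\<sigma> k) u)^2 \<partial>density lborel (normal_density 0 (\<sigma> k))) = 1 / (sqrt (1 + 2 * \<beta> * s\<^sup>2) * sqrt (1 + 6 * \<beta> * s\<^sup>2))"
        using J2_val[of \<beta> s] bpos s unfolding s_def by simp
      show ?thesis by (simp only: c2 jv)
    qed
    also have "\<dots> = (1 / sqrt (1 + 2 * \<beta> * s\<^sup>2))^d * (1 / sqrt (1 + 6 * \<beta> * s\<^sup>2))^d"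
      by (simp add: power_mult_distrib[symmetric])
    also have "\<dots> = (1 + 2 * \<beta> * s\<^sup>2) powr (- real d / 2) * (1 + 6 * \<beta> * s\<^sup>2) powr (- real d / 2)"
      using bpos by (intro arg_cong2[where f="(*)"] inv_sqrt_pow) (simp_all add: add_pos_nonneg)
    finally show ?thesis unfolding Bv_def by (simp add: algebra_simps)
  qed
  have "Hf 2 1 = (\<integral>z. (\<Sum>j\<in>J0. \<Sum>l\<in>J0. f z j l) \<partial>\<mu>)"
    unfolding Hf_def Lz_def f_def ea_def by (simp add: power2_eq_square sum_product)
  also have "\<dots> = (\<Sum>j\<in>J0. \<Sum>l\<in>J0. (\<integral>z. f z j l \<partial>\<mu>))"
    using fint by (simp add: Bochner_Integration.integral_sum Bochner_Integration.integrable_sum)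
  also have "\<dots> = (\<Sum>j\<in>J0. Av + real (card J0 - 1) * Bv)"
  proof (rule sum.cong[OF refl])
    fix j assume j: "j \<in> J0"
    have "(\<Sum>l\<in>J0. (\<integral>z. f z j l \<partial>\<mu>)) = (\<integral>z. f z j j \<partial>\<mu>) + (\<Sum>l\<in>J0 - {j}. (\<integral>z. f z j l \<partial>\<mu>))"
      using finJ0 j by (simp add: sum.remove)
    also have "(\<Sum>l\<in>J0 - {j}. (\<integral>z. f z j l \<partial>\<mu>)) = (\<Sum>l\<in>J0 - {j}. Bv)"
      using j by (intro sum.cong) (auto intro!: fB)
    finally show "(\<Sum>l\<in>J0. (\<integral>z. f z j l \<partial>\<mu>)) = Av + real (card J0 - 1) * Bv"
      using fA[OF j] j finJ0 by simp
  qed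
  also have "\<dots> = real (N - 1) * (Av + real (N - 1 - 1) * Bv)" using cardJ0 by simp
  also have "\<dots> = exp (2 * a) * (real N - 1) * (8 * (\<sigma> k)\<^sup>2 * \<beta> + 1) powr (- real d / 2)
         + (real N - 1) * (real N - 2) * exp (2 * a)
             * (2 * (\<sigma> k)\<^sup>2 * \<beta> + 1) powr (- real d / 2)
             * (6 * (\<sigma> k)\<^sup>2 * \<beta> + 1) powr (- real d / 2)"
  proof -
    have r1: "real (N - 1) = real N - 1" using N2 by simp
    have r2: "real (N - 1 - 1) = real N - 2" using N2 by simp
    show ?thesis unfolding r1 r2 Av_def Bv_def s_def by (simp add: algebra_simps)
  qed
  finally have val: "Hf 2 1 = exp (2 * a) * (real N - 1) * (8 * (\<sigma> k)\<^sup>2 * \<beta> + 1) powr (- real d / 2)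
         + (real N - 1) * (real N - 2) * exp (2 * a)
             * (2 * (\<sigma> k)\<^sup>2 * \<beta> + 1) powr (- real d / 2)
             * (6 * (\<sigma> k)\<^sup>2 * \<beta> + 1) powr (- real d / 2)" .
  show ?thesis using ev dd val by simp
qed
end
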